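(* In the setting of the context, for every unital hermitian cone $N$ on $(K,\ast)$ the following are equivalent: (1) $a_\sigma n^\sigma\in N$ for every $n\in N$ and $\sigma\in G$; (2) $N=M\cap K$ for some unital hermitian cone $M$ on $(D,\ast)$; (3) $N=\lambda^{-1}(L)\cap K$ for some unital hermitian cone $L$ on $(M_n(K),\#)$.
   Context: Let $K/F$ be a finite Galois extension of fields of characteristic $0$ with Galois group $G$, $n=|G|$; write $k^\sigma$ for the image of $k$ under $\sigma$. Let $\Phi$ be a normalized $2$-cocycle and $D=(K/F,\Phi)$ the crossed product: right $K$-vector space with basis $(e_\sigma)_{\sigma\in G}$, $e_{\mathrm{id}}=1$, multiplication $(\sum e_\sigma c_\sigma)(\sum e_\tau d_\tau)=\sum e_{\sigma\tau}\Phi(\sigma,\tau)c_\sigma^\tau d_\tau$. Assume $D$ is a division algebra and $\ast$ an involution on $D$ with $K^\ast\subseteq K$, such that $a_\sigma:=e_\sigma^\ast e_\sigma\in K$ for all $\sigma\in G$ and some unital hermitian cone on $(K,\ast)$ contains all $a_\sigma$. A unital hermitian cone on a ring $R$ with involution $\ast$ is a subset $M\subseteq\{r:r^\ast=r\}$ with $1\in M$, $M+M\subseteq M$, $aMa^\ast\subseteq M$ for all $a\in R$, $M\cap-M=\{0\}$. Let $\lambda\colon D\to M_n(K)$ be the left regular representation, $ae_\tau=\sum_\sigma e_\sigma\lambda(a)_{\sigma\tau}$; for $X=[x_{\sigma\tau}]$ let $X^\ast=[x_{\tau\sigma}^\ast]$, let $A=\mathrm{diag}(a_\sigma)_{\sigma\in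 G}$, and $X^\#=A^{-1}X^\ast A$ (so $\lambda(d^\ast)=\lambda(d)^\#$). *)

theory Defs
  imports Main
begin

text \<open>Galois group: a finite group G of field automorphisms of K (K/F Galois with F the
fixed field of G, by Artin's theorem). We write k^sigma = sigma k, a right action, so
the group product sigma tau satisfies k^(sigma tau) = (k^sigma)^tau, i.e. it is the
function tau o sigma.\<close>

definition gmul :: "('k \<Rightarrow> 'k) \<Rightarrow> ('k \<Rightarrow> 'k) \<Rightarrow> ('k \<Rightarrow> 'k)" where
  "gmul \<sigma> \<tau> = \<tau> \<circ> \<sigma>"

definition field_aut :: "('k::field \<Rightarrow> 'k) \<Rightarrow> bool" where
  "field_aut \<sigma> \<longleftrightarrow> bij \<sigma> \<and> (\<forall>x y. \<sigma> (x + y) = \<sigma> x + \<sigma> y)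
      \<and> (\<forall>x y. \<sigma> (x * y) = \<sigma> x * \<sigma> y) \<and> \<sigma> 1 = 1"

definition finite_aut_group :: "('k::field \<Rightarrow> 'k) set \<Rightarrow> bool" where
  "finite_aut_group G \<longleftrightarrow> finite G \<and> (\<forall>\<sigma>\<in>G. field_aut \<sigma>) \<and> id \<in> G
      \<and> (\<forall>\<sigma>\<in>G. \<forall>\<tau>\<in>G. gmul \<sigma> \<tau> \<in> G) \<and> (\<forall>\<sigma>\<in>G. inv \<sigma> \<in> G)"

definition normalized_cocycle ::
  "('k::field \<Rightarrow> 'k) set \<Rightarrow> (('k \<Rightarrow> 'k) \<Rightarrow> ('k \<Rightarrow> 'k) \<Rightarrow> 'k) \<Rightarrow> bool" where
  "normalized_cocycle G \<Phi> \<longleftrightarrow>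
     (\<forall>\<sigma>\<in>G. \<forall>\<tau>\<in>G. \<Phi> \<sigma> \<tau> \<noteq> 0) \<and>
     (\<forall>\<sigma>\<in>G. \<Phi> id \<sigma> = 1 \<and> \<Phi> \<sigma> id = 1) \<and>
     (\<forall>\<sigma>\<in>G. \<forall>\<tau>\<in>G. \<forall>\<rho>\<in>G.
        \<Phi> (gmul \<sigma> \<tau>) \<rho> * \<rho> (\<Phi> \<sigma> \<tau>) = \<Phi> \<sigma> (gmul \<tau> \<rho>) * \<Phi> \<tau> \<rho>)"

text \<open>Crossed product D = (K/F, Phi): an element sum e_sigma c_sigma is represented by its
coefficient function sigma |-> c_sigma, vanishing outside G.\<close>

type_synonym 'k cp = "('k \<Rightarrow> 'k) \<Rightarrow> 'k"

definition cp_carrier :: "('k::field \<Rightarrow> 'k) set \<Rightarrow> 'k cp set" where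
  "cp_carrier G = {x. \<forall>\<sigma>. \<sigma> \<notin> G \<longrightarrow> x \<sigma> = 0}"

definition cp_add :: "'k::field cp \<Rightarrow> 'k cp \<Rightarrow> 'k cp" where
  "cp_add x y = (\<lambda>\<sigma>. x \<sigma> + y \<sigma>)"

definition cp_neg :: "'k::field cp \<Rightarrow> 'k cp" where
  "cp_neg x = (\<lambda>\<sigma>. - x \<sigma>)"

definition cp_zero :: "'k::field cp" where
  "cp_zero = (\<lambda>\<sigma>. 0)"

definition cp_emb :: "'k::field \<Rightarrow> 'k cp" where
  "cp_emb k = (\<lambda>\<sigma>. if \<sigma> = id then k else 0)"

definition cp_one :: "'k::field cp" where
  "cp_one = cp_emb 1"

definition cp_e :: "('k::field \<Rightarrow> 'k) \<Rightarrow> 'k cp" where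
  "cp_e \<sigma> = (\<lambda>\<rho>. if \<rho> = \<sigma> then 1 else 0)"

text \<open>(sum e_sigma c_sigma)(sum e_tau d_tau) = sum e_(sigma tau) Phi(sigma,tau) c_sigma^tau d_tau\<close>
definition cp_mult :: "('k::field \<Rightarrow> 'k) set \<Rightarrow> (('k \<Rightarrow> 'k) \<Rightarrow> ('k \<Rightarrow> 'k) \<Rightarrow> 'k)
     \<Rightarrow> 'k cp \<Rightarrow> 'k cp \<Rightarrow> 'k cp" where
  "cp_mult G \<Phi> x y = (\<lambda>\<rho>. \<Sum>\<sigma>\<in>G. \<Sum>\<tau>\<in>G.
       if gmul \<sigma> \<tau> = \<rho> then \<Phi> \<sigma> \<tau> * \<tau> (x \<sigma>) * y \<tau> else 0)"

definition cp_division_algebra :: "('k::field \<Rightarrow> 'k) set \<Rightarrow> (('k \<Rightarrow> 'k) \<Rightarrow> ('k \<Rightarrow> 'k) \<Rightarrow> 'k) \<Rightarrow> bool" where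
  "cp_division_algebra G \<Phi> \<longleftrightarrow>
     (\<forall>x\<in>cp_carrier G. x \<noteq> cp_zero \<longrightarrow>
        (\<exists>y\<in>cp_carrier G. cp_mult G \<Phi> x y = cp_one \<and> cp_mult G \<Phi> y x = cp_one))"

definition cp_involution :: "('k::field \<Rightarrow> 'k) set \<Rightarrow> (('k \<Rightarrow> 'k) \<Rightarrow> ('k \<Rightarrow> 'k) \<Rightarrow> 'k)
     \<Rightarrow> ('k cp \<Rightarrow> 'k cp) \<Rightarrow> bool" where
  "cp_involution G \<Phi> s \<longleftrightarrow>
     (\<forall>x\<in>cp_carrier G. s x \<in> cp_carrier G) \<and>
     (\<forall>x\<in>cp_carrier G. \<forall>y\<in>cp_carrier G. s (cp_add x y) = cp_add (s x) (s y)) \<and>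
     (\<forall>x\<in>cp_carrier G. \<forall>y\<in>cp_carrier G. s (cp_mult G \<Phi> x y) = cp_mult G \<Phi> (s y) (s x)) \<and>
     (\<forall>x\<in>cp_carrier G. s (s x) = x)"

text \<open>Restriction of the involution to K (meaningful when K^* is contained in K).\<close>
definition star_K :: "('k::field cp \<Rightarrow> 'k cp) \<Rightarrow> 'k \<Rightarrow> 'k" where
  "star_K s k = s (cp_emb k) id"

text \<open>a_sigma = e_sigma^* e_sigma, read as an element of K (its e_id-coefficient).\<close>
definition a_coef :: "('k::field \<Rightarrow> 'k) set \<Rightarrow> (('k \<Rightarrow> 'k) \<Rightarrow> ('k \<Rightarrow> 'k) \<Rightarrow> 'k)
     \<Rightarrow> ('k cp \<Rightarrow> 'k cp) \<Rightarrow> ('k \<Rightarrow> 'k) \<Rightarrow> 'k" where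
  "a_coef G \<Phi> s \<sigma> = cp_mult G \<Phi> (s (cp_e \<sigma>)) (cp_e \<sigma>) id"

definition unital_herm_cone :: "'a set \<Rightarrow> ('a \<Rightarrow> 'a \<Rightarrow> 'a) \<Rightarrow> ('a \<Rightarrow> 'a \<Rightarrow> 'a) \<Rightarrow> ('a \<Rightarrow> 'a)
     \<Rightarrow> 'a \<Rightarrow> 'a \<Rightarrow> ('a \<Rightarrow> 'a) \<Rightarrow> 'a set \<Rightarrow> bool" where
  "unital_herm_cone R add mult neg zero one s M \<longleftrightarrow>
     M \<subseteq> {r \<in> R. s r = r} \<and> one \<in> M \<and>
     (\<forall>x\<in>M. \<forall>y\<in>M. add x y \<in> M) \<and>
     (\<forall>a\<in>R. \<forall>x\<in>M. mult (mult a x) (s a) \<in> M) \<and>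
     M \<inter> neg ` M = {zero}"

abbreviation herm_cone_K :: "('k::field \<Rightarrow> 'k) \<Rightarrow> 'k set \<Rightarrow> bool" where
  "herm_cone_K s N \<equiv> unital_herm_cone UNIV (+) (*) uminus 0 1 s N"

abbreviation herm_cone_D :: "('k::field \<Rightarrow> 'k) set \<Rightarrow> (('k \<Rightarrow> 'k) \<Rightarrow> ('k \<Rightarrow> 'k) \<Rightarrow> 'k)
     \<Rightarrow> ('k cp \<Rightarrow> 'k cp) \<Rightarrow> 'k cp set \<Rightarrow> bool" where
  "herm_cone_D G \<Phi> s M \<equiv> unital_herm_cone (cp_carrier G) cp_add (cp_mult G \<Phi>) cp_neg cp_zero cp_one s M"

text \<open>Matrices in M_n(K), rows/columns indexed by G (n = card G).\<close>
type_synonym 'k gmat = "('k \<Rightarrow> 'k) \<Rightarrow> ('k \<Rightarrow> 'k) \<Rightarrow> 'k"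

definition mat_carrier :: "('k::field \<Rightarrow> 'k) set \<Rightarrow> 'k gmat set" where
  "mat_carrier G = {X. \<forall>\<sigma> \<tau>. \<sigma> \<notin> G \<or> \<tau> \<notin> G \<longrightarrow> X \<sigma> \<tau> = 0}"

definition mat_add :: "'k::field gmat \<Rightarrow> 'k gmat \<Rightarrow> 'k gmat" where
  "mat_add X Y = (\<lambda>\<sigma> \<tau>. X \<sigma> \<tau> + Y \<sigma> \<tau>)"

definition mat_neg :: "'k::field gmat \<Rightarrow> 'k gmat" where
  "mat_neg X = (\<lambda>\<sigma> \<tau>. - X \<sigma> \<tau>)"

definition mat_zero :: "'k::field gmat" where
  "mat_zero = (\<lambda>\<sigma> \<tau>. 0)"

definition mat_one :: "('k::field \<Rightarrow> 'k) set \<Rightarrow> 'k gmat" where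
  "mat_one G = (\<lambda>\<sigma> \<tau>. if \<sigma> \<in> G \<and> \<sigma> = \<tau> then 1 else 0)"

definition mat_mult :: "('k::field \<Rightarrow> 'k) set \<Rightarrow> 'k gmat \<Rightarrow> 'k gmat \<Rightarrow> 'k gmat" where
  "mat_mult G X Y = (\<lambda>\<sigma> \<rho>. \<Sum>\<tau>\<in>G. X \<sigma> \<tau> * Y \<tau> \<rho>)"

text \<open>X^# = A^-1 X^* A with A = diag(a_sigma) and X^* = [x_(tau sigma)^*].\<close>
definition mat_sharp :: "('k::field \<Rightarrow> 'k) set \<Rightarrow> (('k \<Rightarrow> 'k) \<Rightarrow> 'k) \<Rightarrow> ('k \<Rightarrow> 'k)
     \<Rightarrow> 'k gmat \<Rightarrow> 'k gmat" where
  "mat_sharp G a sK X = (\<lambda>\<sigma> \<tau>. if \<sigma> \<in> G \<and> \<tau> \<in> G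
       then inverse (a \<sigma>) * sK (X \<tau> \<sigma>) * a \<tau> else 0)"

text \<open>Left regular representation: a e_tau = sum_sigma e_sigma lambda(a)_(sigma tau).\<close>
definition lreg :: "('k::field \<Rightarrow> 'k) set \<Rightarrow> (('k \<Rightarrow> 'k) \<Rightarrow> ('k \<Rightarrow> 'k) \<Rightarrow> 'k)
     \<Rightarrow> 'k cp \<Rightarrow> 'k gmat" where
  "lreg G \<Phi> x = (\<lambda>\<sigma> \<tau>. if \<sigma> \<in> G \<and> \<tau> \<in> G then cp_mult G \<Phi> x (cp_e \<tau>) \<sigma> else 0)"

end

theory Submission
  imports Defs
begin

definition mono :: "('k::field \<Rightarrow> 'k) \<Rightarrow> 'k \<Rightarrow> 'k cp" where
  "mono \<alpha> c = (\<lambda>\<rho>. if \<rho> = \<alpha> then c else 0)"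

lemma fa_zero: "field_aut \<sigma> \<Longrightarrow> \<sigma> 0 = 0"
  unfolding field_aut_def by (metis add_cancel_right_right add_0)
lemma fa_add: "field_aut \<sigma> \<Longrightarrow> \<sigma> (x + y) = \<sigma> x + \<sigma> y"
  unfolding field_aut_def by blast
lemma fa_mult: "field_aut \<sigma> \<Longrightarrow> \<sigma> (x * y) = \<sigma> x * \<sigma> y"
  unfolding field_aut_def by blast
lemma fa_one: "field_aut \<sigma> \<Longrightarrow> \<sigma> 1 = 1"
  unfolding field_aut_def by blast
lemma fa_bij: "field_aut \<sigma> \<Longrightarrow> bij \<sigma>"
  unfolding field_aut_def by blast
lemma fa_neg: "field_aut \<sigma> \<Longrightarrow> \<sigma> (- x) = - \<sigma> x"
  by (metis fa_add fa_zero add.right_inverse add_eq_0_iff)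
lemma fa_sum: "field_aut \<sigma> \<Longrightarrow> \<sigma> (sum f A) = (\<Sum>a\<in>A. \<sigma> (f a))"
  by (induction A rule: infinite_finite_induct) (auto simp: fa_zero fa_add)
lemma fa_eq0: "field_aut \<sigma> \<Longrightarrow> \<sigma> x = 0 \<longleftrightarrow> x = 0"
  by (metis fa_bij fa_zero bij_def inj_eq)
lemma fa_if: "field_aut \<sigma> \<Longrightarrow> \<sigma> (if P then a else 0) = (if P then \<sigma> a else 0)"
  by (simp add: fa_zero)

locale cpset =
  fixes G :: "('k::field_char_0 \<Rightarrow> 'k) set"
    and \<Phi> :: "('k \<Rightarrow> 'k) \<Rightarrow> ('k \<Rightarrow> 'k) \<Rightarrow> 'k"
    and s :: "'k cp \<Rightarrow> 'k cp"
  assumes grp: "finite_aut_group G"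
    and coc: "normalized_cocycle G \<Phi>"
    and inv: "cp_involution G \<Phi> s"
    and embK: "\<forall>k. \<exists>k'. s (cp_emb k) = cp_emb k'"
    and aK: "\<forall>\<sigma>\<in>G. \<exists>k. cp_mult G \<Phi> (s (cp_e \<sigma>)) (cp_e \<sigma>) = cp_emb k"
begin

abbreviation "mul \<equiv> cp_mult G \<Phi>"
abbreviation "C \<equiv> cp_carrier G"

lemma finG: "finite G" using grp by (simp add: finite_aut_group_def)
lemma idG: "id \<in> G" using grp by (simp add: finite_aut_group_def)
lemma faG: "\<sigma> \<in> G \<Longrightarrow> field_aut \<sigma>" using grp by (simp add: finite_aut_group_def)
lemma gmulG: "\<sigma> \<in> G \<Longrightarrow> \<tau> \<in> G \<Longrightarrow> gmul \<sigma> \<tau> \<in> G" using grp by (simp add: finite_aut_group_def)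
lemma invG: "\<sigma> \<in> G \<Longrightarrow> inv \<sigma> \<in> G" using grp by (simp add: finite_aut_group_def)
lemma inv_l: "\<sigma> \<in> G \<Longrightarrow> inv \<sigma> \<circ> \<sigma> = id"
  using faG fa_bij by (metis bij_is_inj inv_o_cancel)
lemma inv_r: "\<sigma> \<in> G \<Longrightarrow> \<sigma> \<circ> inv \<sigma> = id"
  using faG fa_bij by (metis bij_is_surj surj_iff)
lemma inv_l': "\<sigma> \<in> G \<Longrightarrow> inv \<sigma> (\<sigma> x) = x"
  using inv_l by (metis comp_apply id_apply)
lemma inv_r': "\<sigma> \<in> G \<Longrightarrow> \<sigma> (inv \<sigma> x) = x"
  using inv_r by (metis comp_apply id_apply)
lemma gmul_id1[simp]: "gmul id \<sigma> = \<sigma>" by (simp add: gmul_def)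
lemma gmul_id2[simp]: "gmul \<sigma> id = \<sigma>" by (simp add: gmul_def)
lemma gmul_assoc: "gmul (gmul a b) c = gmul a (gmul b c)" by (simp add: gmul_def comp_assoc)
lemma gmul_solve: "\<alpha> \<in> G \<Longrightarrow> gmul \<alpha> \<beta> = \<rho> \<longleftrightarrow> \<beta> = gmul (inv \<alpha>) \<rho>"
  unfolding gmul_def using inv_r inv_l by (metis comp_assoc comp_id)
lemma gmul_inv_r: "\<alpha> \<in> G \<Longrightarrow> gmul \<alpha> (inv \<alpha>) = id" by (simp add: gmul_def inv_l)
lemma gmul_inv_l: "\<alpha> \<in> G \<Longrightarrow> gmul (inv \<alpha>) \<alpha> = id" by (simp add: gmul_def inv_r)
lemma inv_inv: "\<alpha> \<in> G \<Longrightarrow> inv (inv \<alpha>) = \<alpha>"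
  using faG fa_bij by (metis inv_inv_eq)

lemma Phi_nz: "\<sigma> \<in> G \<Longrightarrow> \<tau> \<in> G \<Longrightarrow> \<Phi> \<sigma> \<tau> \<noteq> 0" using coc by (simp add: normalized_cocycle_def)
lemma Phi_id1[simp]: "\<sigma> \<in> G \<Longrightarrow> \<Phi> id \<sigma> = 1" using coc by (simp add: normalized_cocycle_def)
lemma Phi_id2[simp]: "\<sigma> \<in> G \<Longrightarrow> \<Phi> \<sigma> id = 1" using coc by (simp add: normalized_cocycle_def)
lemma cocy: "\<sigma> \<in> G \<Longrightarrow> \<tau> \<in> G \<Longrightarrow> \<rho> \<in> G \<Longrightarrow>
   \<Phi> (gmul \<sigma> \<tau>) \<rho> * \<rho> (\<Phi> \<sigma> \<tau>) = \<Phi> \<sigma> (gmul \<tau> \<rho>) * \<Phi> \<tau> \<rho>"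
  using coc by (simp add: normalized_cocycle_def)

lemma mul_C: "mul x y \<in> C"
  unfolding cp_carrier_def cp_mult_def using gmulG by (auto intro!: sum.neutral)

lemma mono_C: "\<alpha> \<in> G \<Longrightarrow> mono \<alpha> c \<in> C"
  unfolding cp_carrier_def mono_def by auto

lemma emb_mono: "cp_emb k = mono id k" by (simp add: cp_emb_def mono_def fun_eq_iff)
lemma e_mono: "cp_e \<sigma> = mono \<sigma> 1" by (simp add: cp_e_def mono_def fun_eq_iff)

lemma mul_mono_left: assumes "\<alpha> \<in> G"
  shows "mul (mono \<alpha> c) y \<rho> = (\<Sum>\<tau>\<in>G. if gmul \<alpha> \<tau> = \<rho> then \<Phi> \<alpha> \<tau> * \<tau> c * y \<tau> else 0)"
proof -
  have "mul (mono \<alpha> c) y \<rho> = (\<Sum>\<sigma>\<in>G. if \<sigma> = \<alpha> then (\<Sum>\<tau>\<in>G. if gmul \<alpha> \<tau> = \<rho> then \<Phi> \<alpha> \<tau> * \<tau> c * y \<tau> else 0) else 0)"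
    unfolding cp_mult_def mono_def
    by (rule sum.cong, simp, auto intro!: sum.neutral simp: fa_zero faG)
  also have "\<dots> = (\<Sum>\<tau>\<in>G. if gmul \<alpha> \<tau> = \<rho> then \<Phi> \<alpha> \<tau> * \<tau> c * y \<tau> else 0)"
    using assms finG by (simp add: sum.delta')
  finally show ?thesis .
qed

lemma mul_mono_mono: assumes "\<alpha> \<in> G" "\<beta> \<in> G"
  shows "mul (mono \<alpha> c) (mono \<beta> d) = mono (gmul \<alpha> \<beta>) (\<Phi> \<alpha> \<beta> * \<beta> c * d)"
proof
  fix \<rho>
  have "mul (mono \<alpha> c) (mono \<beta> d) \<rho> = (\<Sum>\<tau>\<in>G. if \<tau> = \<beta> then (if gmul \<alpha> \<beta> = \<rho> then \<Phi> \<alpha> \<beta> * \<beta> c * d else 0) else 0)"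
    unfolding mul_mono_left[OF assms(1)] by (rule sum.cong) (auto simp: mono_def)
  also have "\<dots> = mono (gmul \<alpha> \<beta>) (\<Phi> \<alpha> \<beta> * \<beta> c * d) \<rho>"
    using assms finG by (auto simp: sum.delta' mono_def)
  finally show "mul (mono \<alpha> c) (mono \<beta> d) \<rho> = mono (gmul \<alpha> \<beta>) (\<Phi> \<alpha> \<beta> * \<beta> c * d) \<rho>" .
qed

lemma mul_emb_left: assumes "y \<in> C" shows "mul (cp_emb k) y = (\<lambda>\<rho>. \<rho> k * y \<rho>)"
proof
  fix \<rho>
  have "mul (cp_emb k) y \<rho> = (\<Sum>\<tau>\<in>G. if \<tau> = \<rho> then \<tau> k * y \<tau> else 0)"
    unfolding emb_mono mul_mono_left[OF idG] by (rule sum.cong) (auto simp: gmul_def)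
  also have "\<dots> = \<rho> k * y \<rho>" using finG assms by (auto simp: sum.delta' cp_carrier_def)
  finally show "mul (cp_emb k) y \<rho> = \<rho> k * y \<rho>" .
qed

lemma mul_emb_right: assumes "y \<in> C" shows "mul y (cp_emb k) = (\<lambda>\<rho>. y \<rho> * k)"
proof
  fix \<rho>
  have "mul y (cp_emb k) \<rho> = (\<Sum>\<sigma>\<in>G. if \<sigma> = \<rho> then y \<sigma> * k else 0)"
    unfolding cp_mult_def cp_emb_def
  proof (rule sum.cong[OF refl])
    fix \<sigma> assume \<sigma>: "\<sigma> \<in> G"
    have "(\<Sum>\<tau>\<in>G. if gmul \<sigma> \<tau> = \<rho> then \<Phi> \<sigma> \<tau> * \<tau> (y \<sigma>) * (if \<tau> = id then k else 0) else 0)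
        = (\<Sum>\<tau>\<in>G. if \<tau> = id then (if \<sigma> = \<rho> then y \<sigma> * k else 0) else 0)"
      using \<sigma> by (intro sum.cong) auto
    also have "\<dots> = (if \<sigma> = \<rho> then y \<sigma> * k else 0)" using finG idG by (simp add: sum.delta')
    finally show "(\<Sum>\<tau>\<in>G. if gmul \<sigma> \<tau> = \<rho> then \<Phi> \<sigma> \<tau> * \<tau> (y \<sigma>) * (if \<tau> = id then k else 0) else 0)
        = (if \<sigma> = \<rho> then y \<sigma> * k else 0)" .
  qed
  also have "\<dots> = y \<rho> * k" using finG assms by (auto simp: sum.delta' cp_carrier_def)
  finally show "mul y (cp_emb k) \<rho> = y \<rho> * k" .
qed

end

lemma sum_collapse: "finite A \<Longrightarrow> a \<in> A \<Longrightarrow> (\<Sum>x\<in>A. if P x \<and> a = x then f x else 0) = (if P a then f a else 0)"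
proof -
  assume "finite A" "a \<in> A"
  have "(\<Sum>x\<in>A. if P x \<and> a = x then f x else 0) = (\<Sum>x\<in>A. if x = a then (if P a then f a else 0) else 0)"
    by (rule sum.cong) auto
  then show ?thesis using \<open>finite A\<close> \<open>a \<in> A\<close> by simp
qed

lemma sum_swap4: "(\<Sum>a\<in>A. \<Sum>b\<in>B. \<Sum>c\<in>C. \<Sum>d\<in>D. f a b c d) = (\<Sum>b\<in>B. \<Sum>c\<in>C. \<Sum>d\<in>D. \<Sum>a\<in>A. f a b c d)"
proof -
  have "(\<Sum>a\<in>A. \<Sum>b\<in>B. \<Sum>c\<in>C. \<Sum>d\<in>D. f a b c d) = (\<Sum>b\<in>B. \<Sum>a\<in>A. \<Sum>c\<in>C. \<Sum>d\<in>D. f a b c d)"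
    by (rule sum.swap)
  also have "\<dots> = (\<Sum>b\<in>B. \<Sum>c\<in>C. \<Sum>a\<in>A. \<Sum>d\<in>D. f a b c d)"
    by (rule sum.cong[OF refl], rule sum.swap)
  also have "\<dots> = (\<Sum>b\<in>B. \<Sum>c\<in>C. \<Sum>d\<in>D. \<Sum>a\<in>A. f a b c d)"
    by (rule sum.cong[OF refl], rule sum.cong[OF refl], rule sum.swap)
  finally show ?thesis .
qed

lemma sum_swap4': "(\<Sum>a\<in>A. \<Sum>b\<in>B. \<Sum>c\<in>C. \<Sum>d\<in>D. f a b c d) = (\<Sum>a\<in>A. \<Sum>c\<in>C. \<Sum>d\<in>D. \<Sum>b\<in>B. f a b c d)"
proof -
  have "\<And>a. (\<Sum>b\<in>B. \<Sum>c\<in>C. \<Sum>d\<in>D. f a b c d) = (\<Sum>c\<in>C. \<Sum>d\<in>D. \<Sum>b\<in>B. f a b c d)"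
  proof -
    fix a
    have "(\<Sum>b\<in>B. \<Sum>c\<in>C. \<Sum>d\<in>D. f a b c d) = (\<Sum>c\<in>C. \<Sum>b\<in>B. \<Sum>d\<in>D. f a b c d)"
      by (rule sum.swap)
    also have "\<dots> = (\<Sum>c\<in>C. \<Sum>d\<in>D. \<Sum>b\<in>B. f a b c d)"
      by (rule sum.cong[OF refl], rule sum.swap)
    finally show "(\<Sum>b\<in>B. \<Sum>c\<in>C. \<Sum>d\<in>D. f a b c d) = (\<Sum>c\<in>C. \<Sum>d\<in>D. \<Sum>b\<in>B. f a b c d)" .
  qed
  then show ?thesis by simp
qed

context cpset begin

lemma mul_assoc: "mul (mul x y) z = mul x (mul y z)"
proof
  fix \<rho>
  define F where "F = (\<lambda>\<sigma> \<tau> \<gamma>. \<Phi> (gmul \<sigma> \<tau>) \<gamma> * \<gamma> (\<Phi> \<sigma> \<tau>) * \<gamma> (\<tau> (x \<sigma>)) * \<gamma> (y \<tau>) * z \<gamma>)"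
  define H where "H = (\<lambda>\<sigma> \<tau> \<gamma>. \<Phi> \<sigma> (gmul \<tau> \<gamma>) * (gmul \<tau> \<gamma>) (x \<sigma>) * \<Phi> \<tau> \<gamma> * \<gamma> (y \<tau>) * z \<gamma>)"
  have "mul (mul x y) z \<rho> = (\<Sum>\<alpha>\<in>G. \<Sum>\<gamma>\<in>G. \<Sum>\<sigma>\<in>G. \<Sum>\<tau>\<in>G. if gmul \<alpha> \<gamma> = \<rho> \<and> gmul \<sigma> \<tau> = \<alpha> then F \<sigma> \<tau> \<gamma> else 0)"
    unfolding cp_mult_def
  proof (intro sum.cong refl)
    fix \<alpha> \<gamma> assume g: "\<gamma> \<in> G"
    show "(if gmul \<alpha> \<gamma> = \<rho> then \<Phi> \<alpha> \<gamma> * \<gamma> (\<Sum>\<sigma>\<in>G. \<Sum>\<tau>\<in>G. if gmul \<sigma> \<tau> = \<alpha> then \<Phi> \<sigma> \<tau> * \<tau> (x \<sigma>) * y \<tau> else 0) * z \<gamma> else 0)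
      = (\<Sum>\<sigma>\<in>G. \<Sum>\<tau>\<in>G. if gmul \<alpha> \<gamma> = \<rho> \<and> gmul \<sigma> \<tau> = \<alpha> then F \<sigma> \<tau> \<gamma> else 0)"
      using faG[OF g] by (auto simp: fa_sum fa_if fa_mult sum_distrib_left sum_distrib_right F_def mult.assoc intro!: sum.cong)
  qed
  also have "\<dots> = (\<Sum>\<gamma>\<in>G. \<Sum>\<sigma>\<in>G. \<Sum>\<tau>\<in>G. \<Sum>\<alpha>\<in>G. if gmul \<alpha> \<gamma> = \<rho> \<and> gmul \<sigma> \<tau> = \<alpha> then F \<sigma> \<tau> \<gamma> else 0)"
    by (rule sum_swap4)
  also have "\<dots> = (\<Sum>\<gamma>\<in>G. \<Sum>\<sigma>\<in>G. \<Sum>\<tau>\<in>G. if gmul (gmul \<sigma> \<tau>) \<gamma> = \<rho> then F \<sigma> \<tau> \<gamma> else 0)"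
  proof (intro sum.cong refl)
    fix \<gamma> \<sigma> \<tau> assume "\<sigma> \<in> G" "\<tau> \<in> G"
    then have "gmul \<sigma> \<tau> \<in> G" by (rule gmulG)
    then show "(\<Sum>\<alpha>\<in>G. if gmul \<alpha> \<gamma> = \<rho> \<and> gmul \<sigma> \<tau> = \<alpha> then F \<sigma> \<tau> \<gamma> else 0) = (if gmul (gmul \<sigma> \<tau>) \<gamma> = \<rho> then F \<sigma> \<tau> \<gamma> else 0)"
      by (rule sum_collapse[OF finG])
  qed
  also have "\<dots> = (\<Sum>\<sigma>\<in>G. \<Sum>\<tau>\<in>G. \<Sum>\<gamma>\<in>G. if gmul \<sigma> (gmul \<tau> \<gamma>) = \<rho> then H \<sigma> \<tau> \<gamma> else 0)"
  proof -
    have "(\<Sum>\<gamma>\<in>G. \<Sum>\<sigma>\<in>G. \<Sum>\<tau>\<in>G. if gmul (gmul \<sigma> \<tau>) \<gamma> = \<rho> then F \<sigma> \<tau> \<gamma> else 0)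
      = (\<Sum>\<sigma>\<in>G. \<Sum>\<gamma>\<in>G. \<Sum>\<tau>\<in>G. if gmul (gmul \<sigma> \<tau>) \<gamma> = \<rho> then F \<sigma> \<tau> \<gamma> else 0)" by (rule sum.swap)
    also have "\<dots> = (\<Sum>\<sigma>\<in>G. \<Sum>\<tau>\<in>G. \<Sum>\<gamma>\<in>G. if gmul (gmul \<sigma> \<tau>) \<gamma> = \<rho> then F \<sigma> \<tau> \<gamma> else 0)"
      by (rule sum.cong[OF refl], rule sum.swap)
    also have "\<dots> = (\<Sum>\<sigma>\<in>G. \<Sum>\<tau>\<in>G. \<Sum>\<gamma>\<in>G. if gmul \<sigma> (gmul \<tau> \<gamma>) = \<rho> then H \<sigma> \<tau> \<gamma> else 0)"
    proof (intro sum.cong refl)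
      fix \<sigma> \<tau> \<gamma> assume a: "\<sigma> \<in> G" "\<tau> \<in> G" "\<gamma> \<in> G"
      have "F \<sigma> \<tau> \<gamma> = (\<Phi> (gmul \<sigma> \<tau>) \<gamma> * \<gamma> (\<Phi> \<sigma> \<tau>)) * (\<gamma> (\<tau> (x \<sigma>)) * \<gamma> (y \<tau>) * z \<gamma>)"
        unfolding F_def by (simp add: mult.assoc)
      also have "\<dots> = (\<Phi> \<sigma> (gmul \<tau> \<gamma>) * \<Phi> \<tau> \<gamma>) * (\<gamma> (\<tau> (x \<sigma>)) * \<gamma> (y \<tau>) * z \<gamma>)"
        using cocy[OF a] by simp
      also have "\<dots> = H \<sigma> \<tau> \<gamma>" unfolding H_def gmul_def by (simp add: mult_ac)
      finally show "(if gmul (gmul \<sigma> \<tau>) \<gamma> = \<rho> then F \<sigma> \<tau> \<gamma> else 0) = (if gmul \<sigma> (gmul \<tau> \<gamma>) = \<rho> then H \<sigma> \<tau> \<gamma> else 0)"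
        by (simp add: gmul_assoc)
    qed
    finally show ?thesis .
  qed
  also have "\<dots> = (\<Sum>\<sigma>\<in>G. \<Sum>\<tau>\<in>G. \<Sum>\<gamma>\<in>G. \<Sum>\<beta>\<in>G. if gmul \<sigma> \<beta> = \<rho> \<and> gmul \<tau> \<gamma> = \<beta> then H \<sigma> \<tau> \<gamma> else 0)"
  proof (intro sum.cong refl)
    fix \<gamma> \<sigma> \<tau> assume "\<gamma> \<in> G" "\<tau> \<in> G"
    then have "gmul \<tau> \<gamma> \<in> G" by (simp add: gmulG)
    then show "(if gmul \<sigma> (gmul \<tau> \<gamma>) = \<rho> then H \<sigma> \<tau> \<gamma> else 0) = (\<Sum>\<beta>\<in>G. if gmul \<sigma> \<beta> = \<rho> \<and> gmul \<tau> \<gamma> = \<beta> then H \<sigma> \<tau> \<gamma> else 0)"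
      using finG by (subst sum_collapse) auto
  qed
  also have "\<dots> = (\<Sum>\<sigma>\<in>G. \<Sum>\<beta>\<in>G. \<Sum>\<tau>\<in>G. \<Sum>\<gamma>\<in>G. if gmul \<sigma> \<beta> = \<rho> \<and> gmul \<tau> \<gamma> = \<beta> then H \<sigma> \<tau> \<gamma> else 0)"
    by (rule sum_swap4'[symmetric])
  also have "\<dots> = mul x (mul y z) \<rho>"
    unfolding cp_mult_def
  proof (intro sum.cong refl)
    fix \<sigma> \<beta> assume g: "\<beta> \<in> G"
    show "(\<Sum>\<tau>\<in>G. \<Sum>\<gamma>\<in>G. if gmul \<sigma> \<beta> = \<rho> \<and> gmul \<tau> \<gamma> = \<beta> then H \<sigma> \<tau> \<gamma> else 0) =
      (if gmul \<sigma> \<beta> = \<rho> then \<Phi> \<sigma> \<beta> * \<beta> (x \<sigma>) * (\<Sum>\<tau>\<in>G. \<Sum>\<gamma>\<in>G. if gmul \<tau> \<gamma> = \<beta> then \<Phi> \<tau> \<gamma> * \<gamma> (y \<tau>) * z \<gamma> else 0) else 0)"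
      by (auto simp: sum_distrib_left H_def mult.assoc intro!: sum.cong)
  qed
  finally show "mul (mul x y) z \<rho> = mul x (mul y z) \<rho>" .
qed

end

context cpset begin

abbreviation "sK \<equiv> star_K s"
abbreviation "a \<equiv> a_coef G \<Phi> s"

lemma s_C: "x \<in> C \<Longrightarrow> s x \<in> C" using inv by (simp add: cp_involution_def)
lemma s_add: "x \<in> C \<Longrightarrow> y \<in> C \<Longrightarrow> s (cp_add x y) = cp_add (s x) (s y)" using inv by (simp add: cp_involution_def)
lemma s_mul: "x \<in> C \<Longrightarrow> y \<in> C \<Longrightarrow> s (mul x y) = mul (s y) (s x)" using inv by (simp add: cp_involution_def)
lemma s_s: "x \<in> C \<Longrightarrow> s (s x) = x" using inv by (simp add: cp_involution_def)

lemma zero_C: "cp_zero \<in> C" by (simp add: cp_zero_def cp_carrier_def)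
lemma add_C: "x \<in> C \<Longrightarrow> y \<in> C \<Longrightarrow> cp_add x y \<in> C" by (simp add: cp_add_def cp_carrier_def)
lemma neg_C: "x \<in> C \<Longrightarrow> cp_neg x \<in> C" by (simp add: cp_neg_def cp_carrier_def)
lemma emb_C: "cp_emb k \<in> C" by (simp add: emb_mono mono_C idG)
lemma one_C: "cp_one \<in> C" by (simp add: cp_one_def emb_C)
lemma e_C: "\<sigma> \<in> G \<Longrightarrow> cp_e \<sigma> \<in> C" by (simp add: e_mono mono_C)

lemma s_zero: "s cp_zero = cp_zero"
proof -
  have "s cp_zero = s (cp_add cp_zero cp_zero)" by (simp add: cp_add_def cp_zero_def)
  also have "\<dots> = cp_add (s cp_zero) (s cp_zero)" by (simp add: s_add zero_C)
  finally show ?thesis by (simp add: cp_add_def cp_zero_def fun_eq_iff)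
qed

lemma mul_one_r: "y \<in> C \<Longrightarrow> mul y cp_one = y"
  by (simp add: cp_one_def mul_emb_right)
lemma mul_one_l: assumes "y \<in> C" shows "mul cp_one y = y"
proof
  fix \<rho> show "mul cp_one y \<rho> = y \<rho>"
    using assms by (cases "\<rho> \<in> G") (auto simp: cp_one_def mul_emb_left cp_carrier_def fa_one faG)
qed

lemma s_one: "s cp_one = cp_one"
proof -
  have "s cp_one = mul (s cp_one) cp_one" by (simp add: mul_one_r s_C one_C)
  also have "\<dots> = mul (s cp_one) (s (s cp_one))" by (simp add: s_s one_C)
  also have "\<dots> = s (mul (s cp_one) cp_one)" by (simp add: s_mul s_C one_C)
  also have "\<dots> = cp_one" by (simp add: mul_one_r s_C one_C s_s)
  finally show ?thesis .
qed

lemma s_emb: "s (cp_emb k) = cp_emb (sK k)"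
  using embK unfolding star_K_def by (metis cp_emb_def)

lemma emb_inj: "cp_emb k = cp_emb l \<Longrightarrow> k = l" by (metis cp_emb_def)

lemma emb_add: "cp_add (cp_emb k) (cp_emb l) = cp_emb (k + l)" by (auto simp: cp_add_def cp_emb_def)
lemma emb_mul: "mul (cp_emb k) (cp_emb l) = cp_emb (k * l)"
  by (simp add: emb_mono mul_mono_mono idG)
lemma emb_neg: "cp_neg (cp_emb k) = cp_emb (- k)" by (auto simp: cp_neg_def cp_emb_def)
lemma emb_zero: "cp_emb 0 = cp_zero" by (auto simp: cp_zero_def cp_emb_def)

lemma sK_add: "sK (k + l) = sK k + sK l"
  by (metis emb_add s_add emb_C s_emb emb_inj)
lemma sK_mul: "sK (k * l) = sK k * sK l"
  by (metis emb_mul s_mul emb_C s_emb emb_inj mult.commute)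
lemma sK_one: "sK 1 = 1" by (metis s_one cp_one_def s_emb emb_inj)
lemma sK_sK: "sK (sK k) = k" by (metis s_s emb_C s_emb emb_inj)
lemma sK_zero: "sK 0 = 0" by (metis s_zero emb_zero s_emb emb_inj)
lemma sK_neg: "sK (- k) = - sK k" by (metis sK_add sK_zero add.right_inverse add_eq_0_iff)
lemma sK_inverse: "sK (inverse k) = inverse (sK k)"
proof (cases "k = 0")
  case True then show ?thesis by (simp add: sK_zero)
next
  case False
  then have "sK k * sK (inverse k) = 1" by (metis sK_mul sK_one right_inverse)
  then show ?thesis by (metis inverse_unique)
qed
lemma sK_sum: "sK (sum f A) = (\<Sum>x\<in>A. sK (f x))"
  by (induction A rule: infinite_finite_induct) (auto simp: sK_zero sK_add)
lemma sK_eq0: "sK k = 0 \<longleftrightarrow> k = 0" by (metis sK_sK sK_zero)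

lemma a_emb: "\<sigma> \<in> G \<Longrightarrow> mul (s (cp_e \<sigma>)) (cp_e \<sigma>) = cp_emb (a \<sigma>)"
  using aK unfolding a_coef_def by (metis cp_emb_def)

lemma mul_mono_left_id: assumes "\<alpha> \<in> G" "y \<in> C"
  shows "mul (mono \<alpha> c) y id = \<Phi> \<alpha> (inv \<alpha>) * inv \<alpha> c * y (inv \<alpha>)"
proof -
  have "mul (mono \<alpha> c) y id = (\<Sum>\<tau>\<in>G. if \<tau> = inv \<alpha> then \<Phi> \<alpha> \<tau> * \<tau> c * y \<tau> else 0)"
    unfolding mul_mono_left[OF assms(1)] using assms(1) by (intro sum.cong) (auto simp: gmul_solve)
  then show ?thesis using finG invG[OF assms(1)] by simp
qed

definition "c \<sigma> = inv \<sigma> (a \<sigma>) * inverse (\<Phi> \<sigma> (inv \<sigma>))"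

lemma s_e: assumes "\<sigma> \<in> G" shows "s (cp_e \<sigma>) = mono (inv \<sigma>) (c \<sigma>)"
proof -
  have iG: "inv \<sigma> \<in> G" by (rule invG[OF assms])
  have nz: "\<Phi> \<sigma> (inv \<sigma>) \<noteq> 0" by (simp add: Phi_nz assms iG)
  have 1: "mul (cp_e \<sigma>) (cp_e (inv \<sigma>)) = cp_emb (\<Phi> \<sigma> (inv \<sigma>))"
    by (simp add: e_mono emb_mono mul_mono_mono assms iG gmul_inv_r fa_one faG)
  have 2: "cp_one = mul (mul (cp_e \<sigma>) (cp_e (inv \<sigma>))) (cp_emb (inverse (\<Phi> \<sigma> (inv \<sigma>))))"
    by (simp add: 1 emb_mul nz cp_one_def)
  have "s (cp_e \<sigma>) = mul (s (cp_e \<sigma>)) cp_one" by (simp add: mul_one_r s_C e_C assms)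
  also have "\<dots> = mul (mul (s (cp_e \<sigma>)) (cp_e \<sigma>)) (mul (cp_e (inv \<sigma>)) (cp_emb (inverse (\<Phi> \<sigma> (inv \<sigma>)))))"
    by (simp add: 2 mul_assoc)
  also have "\<dots> = mul (cp_emb (a \<sigma>)) (mul (cp_e (inv \<sigma>)) (cp_emb (inverse (\<Phi> \<sigma> (inv \<sigma>)))))"
    by (simp add: a_emb assms)
  also have "\<dots> = mono (inv \<sigma>) (c \<sigma>)"
    by (simp add: assms e_mono emb_mono mul_mono_mono iG idG c_def fa_one faG)
  finally show ?thesis .
qed

lemma a_nz: assumes "\<sigma> \<in> G" shows "a \<sigma> \<noteq> 0"
proof
  assume "a \<sigma> = 0"
  then have "c \<sigma> = 0" by (simp add: c_def fa_zero faG invG assms)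
  then have "s (cp_e \<sigma>) = cp_zero" by (simp add: s_e assms mono_def cp_zero_def)
  then have "cp_e \<sigma> = cp_zero" by (metis s_s e_C assms s_zero)
  then show False by (metis cp_e_def cp_zero_def zero_neq_one)
qed

lemma factA: assumes "\<sigma> \<in> G" "y \<in> C" shows "mul (s (cp_e \<sigma>)) y id = a \<sigma> * y \<sigma>"
proof -
  have iG: "inv \<sigma> \<in> G" by (rule invG[OF assms(1)])
  have "mul (s (cp_e \<sigma>)) y id = \<Phi> (inv \<sigma>) \<sigma> * \<sigma> (c \<sigma>) * y \<sigma>"
    by (simp add: s_e assms mul_mono_left_id iG inv_inv)
  moreover have "a \<sigma> = \<Phi> (inv \<sigma>) \<sigma> * \<sigma> (c \<sigma>) * cp_e \<sigma> \<sigma>"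
    by (simp add: a_coef_def s_e assms mul_mono_left_id iG inv_inv e_C del: One_nat_def)
  ultimately show ?thesis by (simp add: cp_e_def)
qed

lemma e_id: "cp_e id = cp_one" by (simp add: cp_e_def cp_one_def cp_emb_def)
lemma a_id: "a id = 1"
  by (simp add: a_coef_def e_id s_one mul_one_l one_C) (simp add: cp_one_def cp_emb_def)

lemma sK_comm: assumes "\<sigma> \<in> G" shows "sK (\<sigma> k) = \<sigma> (sK k)"
proof -
  have iG: "inv \<sigma> \<in> G" by (rule invG[OF assms(1)])
  have "mul (cp_emb k) (cp_e \<sigma>) = mul (cp_e \<sigma>) (cp_emb (\<sigma> k))"
    by (simp add: emb_mono e_mono mul_mono_mono assms idG)
  then have "s (mul (cp_emb k) (cp_e \<sigma>)) = s (mul (cp_e \<sigma>) (cp_emb (\<sigma> k)))" by simp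
  then have "mul (mono (inv \<sigma>) (c \<sigma>)) (cp_emb (sK k)) = mul (cp_emb (sK (\<sigma> k))) (mono (inv \<sigma>) (c \<sigma>))"
    by (simp add: s_mul emb_C e_C assms s_emb s_e)
  then have "mono (inv \<sigma>) (c \<sigma> * sK k) = mono (inv \<sigma>) (inv \<sigma> (sK (\<sigma> k)) * c \<sigma>)"
    by (simp add: emb_mono mul_mono_mono iG idG)
  then have "c \<sigma> * sK k = inv \<sigma> (sK (\<sigma> k)) * c \<sigma>" by (metis mono_def)
  moreover have "c \<sigma> \<noteq> 0" using a_nz[OF assms] Phi_nz[OF assms iG]
    by (simp add: c_def fa_eq0 faG iG)
  ultimately have "sK k = inv \<sigma> (sK (\<sigma> k))" by (simp add: mult.commute)
  then show ?thesis by (simp add: inv_r' assms)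
qed

lemma a_herm: assumes "\<sigma> \<in> G" shows "sK (a \<sigma>) = a \<sigma>"
proof -
  have "cp_emb (sK (a \<sigma>)) = s (mul (s (cp_e \<sigma>)) (cp_e \<sigma>))" by (simp add: a_emb assms s_emb)
  also have "\<dots> = mul (s (cp_e \<sigma>)) (cp_e \<sigma>)" by (simp add: s_mul s_C e_C assms s_s)
  finally show ?thesis by (simp add: a_emb assms emb_inj)
qed

end

definition csum :: "'i set \<Rightarrow> ('i \<Rightarrow> 'k::field cp) \<Rightarrow> 'k cp" where
  "csum I f = (\<lambda>\<rho>. \<Sum>i\<in>I. f i \<rho>)"

context cpset begin

lemma csum_C: "\<forall>i\<in>I. f i \<in> C \<Longrightarrow> csum I f \<in> C"
  by (auto simp: csum_def cp_carrier_def intro!: sum.neutral)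

lemma s_csum: "finite I \<Longrightarrow> \<forall>i\<in>I. f i \<in> C \<Longrightarrow> s (csum I f) = csum I (\<lambda>i. s (f i))"
proof (induction I rule: finite_induct)
  case empty
  have "csum {} f = cp_zero" "csum {} (\<lambda>i. s (f i)) = cp_zero" by (auto simp: csum_def cp_zero_def)
  then show ?case by (simp add: s_zero)
next
  case (insert i I)
  have "csum (insert i I) f = cp_add (f i) (csum I f)" using insert by (auto simp: csum_def cp_add_def)
  moreover have "csum (insert i I) (\<lambda>i. s (f i)) = cp_add (s (f i)) (csum I (\<lambda>i. s (f i)))"
    using insert by (auto simp: csum_def cp_add_def)
  ultimately show ?case using insert by (simp add: s_add csum_C)
qed

lemma decomp: "z \<in> C \<Longrightarrow> z = csum G (\<lambda>\<rho>. mul (cp_e \<rho>) (cp_emb (z \<rho>)))"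
proof
  fix x assume z: "z \<in> C"
  have "csum G (\<lambda>\<rho>. mul (cp_e \<rho>) (cp_emb (z \<rho>))) x = (\<Sum>\<rho>\<in>G. if x = \<rho> then z \<rho> else 0)"
    unfolding csum_def by (intro sum.cong) (auto simp: e_mono emb_mono mul_mono_mono idG fa_one faG, auto simp: mono_def)
  also have "\<dots> = z x" using finG z by (auto simp: cp_carrier_def)
  finally show "z x = csum G (\<lambda>\<rho>. mul (cp_e \<rho>) (cp_emb (z \<rho>))) x" by simp
qed

lemma c_id: "c id = 1" by (simp add: c_def a_id idG)

lemma factB: assumes "z \<in> C" shows "s z id = sK (z id)"
proof -
  have "s z = csum G (\<lambda>\<rho>. s (mul (cp_e \<rho>) (cp_emb (z \<rho>))))"
    by (subst decomp[OF assms], rule s_csum) (auto simp: finG mul_C)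
  also have "\<dots> = csum G (\<lambda>\<rho>. mono (inv \<rho>) (inv \<rho> (sK (z \<rho>)) * c \<rho>))"
    unfolding csum_def
    by (intro ext sum.cong refl) (simp add: s_mul e_C emb_C s_emb s_e, simp add: emb_mono mul_mono_mono invG idG)
  finally have "s z id = (\<Sum>\<rho>\<in>G. mono (inv \<rho>) (inv \<rho> (sK (z \<rho>)) * c \<rho>) id)" by (simp add: csum_def)
  also have "\<dots> = (\<Sum>\<rho>\<in>G. if \<rho> = id then sK (z id) else 0)"
  proof (intro sum.cong refl)
    fix \<rho> assume r: "\<rho> \<in> G"
    have "inv \<rho> = id \<longleftrightarrow> \<rho> = id" by (metis inv_id inv_inv r)
    then show "mono (inv \<rho>) (inv \<rho> (sK (z \<rho>)) * c \<rho>) id = (if \<rho> = id then sK (z id) else 0)"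
      by (auto simp: mono_def c_id)
  qed
  also have "\<dots> = sK (z id)" using finG idG by simp
  finally show ?thesis .
qed

lemma mul_add_l: "mul (cp_add x y) z = cp_add (mul x z) (mul y z)"
  unfolding cp_mult_def cp_add_def
  by (auto simp: fun_eq_iff sum.distrib[symmetric] fa_add faG algebra_simps intro!: sum.cong)
lemma mul_neg_l: "mul (cp_neg x) z = cp_neg (mul x z)"
  unfolding cp_mult_def cp_neg_def
  by (auto simp: fun_eq_iff sum_negf[symmetric] fa_neg faG intro!: sum.cong)
lemma mul_zero_l: "mul cp_zero z = cp_zero"
  unfolding cp_mult_def cp_zero_def by (auto simp: fun_eq_iff fa_zero faG intro!: sum.neutral)

lemma rlin: "mul x w \<sigma> = (\<Sum>\<tau>\<in>G. mul x (cp_e \<tau>) \<sigma> * w \<tau>)"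
proof -
  have "(\<Sum>\<tau>\<in>G. mul x (cp_e \<tau>) \<sigma> * w \<tau>) =
     (\<Sum>\<tau>\<in>G. \<Sum>\<alpha>\<in>G. \<Sum>\<beta>\<in>G. if gmul \<alpha> \<beta> = \<sigma> \<and> \<tau> = \<beta> then \<Phi> \<alpha> \<beta> * \<beta> (x \<alpha>) * w \<beta> else 0)"
    unfolding cp_mult_def cp_e_def by (auto simp: sum_distrib_right intro!: sum.cong)
  also have "\<dots> = (\<Sum>\<alpha>\<in>G. \<Sum>\<beta>\<in>G. \<Sum>\<tau>\<in>G. if gmul \<alpha> \<beta> = \<sigma> \<and> \<tau> = \<beta> then \<Phi> \<alpha> \<beta> * \<beta> (x \<alpha>) * w \<beta> else 0)"
  proof -
    have "(\<Sum>\<tau>\<in>G. \<Sum>\<alpha>\<in>G. \<Sum>\<beta>\<in>G. if gmul \<alpha> \<beta> = \<sigma> \<and> \<tau> = \<beta> then \<Phi> \<alpha> \<beta> * \<beta> (x \<alpha>) * w \<beta> else 0)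
      = (\<Sum>\<alpha>\<in>G. \<Sum>\<tau>\<in>G. \<Sum>\<beta>\<in>G. if gmul \<alpha> \<beta> = \<sigma> \<and> \<tau> = \<beta> then \<Phi> \<alpha> \<beta> * \<beta> (x \<alpha>) * w \<beta> else 0)"
      by (rule sum.swap)
    also have "\<dots> = (\<Sum>\<alpha>\<in>G. \<Sum>\<beta>\<in>G. \<Sum>\<tau>\<in>G. if gmul \<alpha> \<beta> = \<sigma> \<and> \<tau> = \<beta> then \<Phi> \<alpha> \<beta> * \<beta> (x \<alpha>) * w \<beta> else 0)"
      by (rule sum.cong[OF refl], rule sum.swap)
    finally show ?thesis .
  qed
  also have "\<dots> = mul x w \<sigma>"
    unfolding cp_mult_def
  proof (intro sum.cong refl)
    fix \<alpha> \<beta> assume b: "\<beta> \<in> G"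
    have "(\<Sum>\<tau>\<in>G. if gmul \<alpha> \<beta> = \<sigma> \<and> \<tau> = \<beta> then \<Phi> \<alpha> \<beta> * \<beta> (x \<alpha>) * w \<beta> else 0)
      = (\<Sum>\<tau>\<in>G. if \<tau> = \<beta> then (if gmul \<alpha> \<beta> = \<sigma> then \<Phi> \<alpha> \<beta> * \<beta> (x \<alpha>) * w \<beta> else 0) else 0)"
      by (rule sum.cong) auto
    then show "(\<Sum>\<tau>\<in>G. if gmul \<alpha> \<beta> = \<sigma> \<and> \<tau> = \<beta> then \<Phi> \<alpha> \<beta> * \<beta> (x \<alpha>) * w \<beta> else 0)
      = (if gmul \<alpha> \<beta> = \<sigma> then \<Phi> \<alpha> \<beta> * \<beta> (x \<alpha>) * w \<beta> else 0)" using finG b by simp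
  qed
  finally show ?thesis by simp
qed

abbreviation "lr \<equiv> lreg G \<Phi>"
abbreviation "sh \<equiv> mat_sharp G a sK"
abbreviation "MC \<equiv> mat_carrier G"
abbreviation "mm \<equiv> mat_mult G"

lemma lr_C: "lr x \<in> MC" by (simp add: lreg_def mat_carrier_def)

lemma lr_col: "x \<in> C \<Longrightarrow> \<sigma> \<in> G \<Longrightarrow> lr x \<sigma> id = x \<sigma>"
  by (simp add: lreg_def idG e_id mul_one_r)

lemma lr_inj: assumes "x \<in> C" "y \<in> C" "lr x = lr y" shows "x = y"
proof
  fix \<sigma> show "x \<sigma> = y \<sigma>"
    using assms lr_col[of x \<sigma>] lr_col[of y \<sigma>] by (cases "\<sigma> \<in> G") (auto simp: cp_carrier_def)
qed

lemma lr_add: "lr (cp_add x y) = mat_add (lr x) (lr y)"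
  by (simp add: lreg_def mat_add_def mul_add_l fun_eq_iff, simp add: cp_add_def)
lemma lr_neg: "lr (cp_neg x) = mat_neg (lr x)"
  by (simp add: lreg_def mat_neg_def mul_neg_l fun_eq_iff, simp add: cp_neg_def)
lemma lr_zero: "lr cp_zero = mat_zero"
  by (simp add: lreg_def mat_zero_def mul_zero_l fun_eq_iff, simp add: cp_zero_def)
lemma lr_one: "lr cp_one = mat_one G"
  by (intro ext) (auto simp: lreg_def mat_one_def mul_one_l e_C, auto simp: cp_e_def)
lemma lr_mul: "lr (mul x y) = mm (lr x) (lr y)"
proof (intro ext)
  fix \<sigma> \<rho>
  show "lr (mul x y) \<sigma> \<rho> = mm (lr x) (lr y) \<sigma> \<rho>"
  proof (cases "\<sigma> \<in> G \<and> \<rho> \<in> G")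
    case True
    then show ?thesis unfolding lreg_def mat_mult_def
      by (simp add: mul_assoc rlin[of x "mul y (cp_e \<rho>)"] cong: sum.cong)
  next
    case False
    then show ?thesis unfolding lreg_def mat_mult_def by (auto intro!: sum.neutral)
  qed
qed

lemma sharp_key: assumes x: "x \<in> C" and st: "\<sigma> \<in> G" "\<tau> \<in> G"
  shows "mul (s x) (cp_e \<tau>) \<sigma> = inverse (a \<sigma>) * sK (mul x (cp_e \<sigma>) \<tau>) * a \<tau>"
proof -
  let ?w = "mul x (cp_e \<sigma>)"
  have "a \<sigma> * mul (s x) (cp_e \<tau>) \<sigma> = mul (s (cp_e \<sigma>)) (mul (s x) (cp_e \<tau>)) id"
    by (simp add: factA st mul_C)
  also have "\<dots> = mul (s ?w) (cp_e \<tau>) id"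
    by (simp add: mul_assoc[symmetric] s_mul x e_C st)
  also have "\<dots> = mul (s ?w) (s (s (cp_e \<tau>))) id" by (simp add: s_s e_C st)
  also have "\<dots> = s (mul (s (cp_e \<tau>)) ?w) id" by (simp add: s_mul s_C e_C st mul_C)
  also have "\<dots> = sK (a \<tau> * ?w \<tau>)" by (simp add: factB mul_C factA st)
  also have "\<dots> = a \<tau> * sK (?w \<tau>)" by (simp add: sK_mul a_herm st)
  finally have "a \<sigma> * mul (s x) (cp_e \<tau>) \<sigma> = a \<tau> * sK (?w \<tau>)" .
  then show ?thesis using a_nz[OF st(1)] by (simp add: field_simps)
qed

lemma lr_s: "x \<in> C \<Longrightarrow> lr (s x) = sh (lr x)"
  by (auto simp: lreg_def mat_sharp_def sharp_key fun_eq_iff)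

end

context cpset begin

lemma pullback:
  assumes L: "unital_herm_cone MC mat_add mm mat_neg mat_zero (mat_one G) sh L"
  shows "herm_cone_D G \<Phi> s {x\<in>C. lr x \<in> L}"
proof -
  have Lh: "\<And>X. X \<in> L \<Longrightarrow> X \<in> MC \<and> sh X = X" using L unfolding unital_herm_cone_def by blast
  have L1: "mat_one G \<in> L" using L unfolding unital_herm_cone_def by blast
  have Ladd: "\<And>X Y. X \<in> L \<Longrightarrow> Y \<in> L \<Longrightarrow> mat_add X Y \<in> L" using L unfolding unital_herm_cone_def by blast
  have Lc: "\<And>A X. A \<in> MC \<Longrightarrow> X \<in> L \<Longrightarrow> mm (mm A X) (sh A) \<in> L" using L unfolding unital_herm_cone_def by blast
  have Lp: "L \<inter> mat_neg ` L = {mat_zero}" using L unfolding unital_herm_cone_def by blast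
  have L0: "mat_zero \<in> L" using Lp by blast
  let ?M = "{x\<in>C. lr x \<in> L}"
  have "?M \<subseteq> {r \<in> C. s r = r}"
  proof clarify
    fix x assume x: "x \<in> C" "lr x \<in> L"
    then have "lr (s x) = lr x" using Lh by (simp add: lr_s)
    then show "s x = x" using x by (simp add: lr_inj s_C)
  qed
  moreover have "cp_one \<in> ?M" by (simp add: one_C lr_one L1)
  moreover have "\<forall>x\<in>?M. \<forall>y\<in>?M. cp_add x y \<in> ?M" by (simp add: add_C lr_add Ladd)
  moreover have "\<forall>b\<in>C. \<forall>x\<in>?M. mul (mul b x) (s b) \<in> ?M"
  proof (intro ballI)
    fix b x assume b: "b \<in> C" and x: "x \<in> ?M"
    have "lr (mul (mul b x) (s b)) = mm (mm (lr b) (lr x)) (sh (lr b))"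
      using b by (simp only: lr_mul lr_s)
    also have "\<dots> \<in> L" using Lc lr_C x by blast
    finally show "mul (mul b x) (s b) \<in> ?M" using mul_C by blast
  qed
  moreover have "?M \<inter> cp_neg ` ?M = {cp_zero}"
  proof
    show "{cp_zero} \<subseteq> ?M \<inter> cp_neg ` ?M"
    proof -
      have z: "cp_zero \<in> ?M" by (simp add: zero_C lr_zero L0)
      have e: "cp_neg cp_zero = cp_zero" by (simp add: cp_neg_def cp_zero_def)
      have "cp_zero \<in> cp_neg ` ?M" using image_eqI[where f=cp_neg and x=cp_zero, OF e[symmetric] z] .
      with \<open>cp_zero \<in> ?M\<close> show ?thesis by blast
    qed
  next
    show "?M \<inter> cp_neg ` ?M \<subseteq> {cp_zero}"
    proof clarify
      fix y assume y: "y \<in> C" "lr y \<in> L" "cp_neg y \<in> C" "lr (cp_neg y) \<in> L"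
      then have "lr (cp_neg y) \<in> L \<inter> mat_neg ` L" by (simp add: lr_neg)
      then have "lr (cp_neg y) = lr cp_zero" using Lp by (simp add: lr_zero)
      then show "cp_neg y = cp_zero" using y by (simp add: lr_inj zero_C)
    qed
  qed
  ultimately show ?thesis unfolding unital_herm_cone_def by (intro conjI)
qed

lemma two_one:
  assumes M: "herm_cone_D G \<Phi> s M" and n: "cp_emb n \<in> M" and st: "\<sigma> \<in> G"
  shows "cp_emb (a \<sigma> * \<sigma> n) \<in> M"
proof -
  have "mul (mul (s (cp_e \<sigma>)) (cp_emb n)) (s (s (cp_e \<sigma>))) \<in> M"
    using M n s_C[OF e_C[OF st]] unfolding unital_herm_cone_def by blast
  moreover have "mul (mul (s (cp_e \<sigma>)) (cp_emb n)) (s (s (cp_e \<sigma>))) = cp_emb (a \<sigma> * \<sigma> n)"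
  proof -
    have "mul (cp_emb n) (cp_e \<sigma>) = mul (cp_e \<sigma>) (cp_emb (\<sigma> n))"
      by (simp add: emb_mono e_mono mul_mono_mono st idG)
    then have "mul (mul (s (cp_e \<sigma>)) (cp_emb n)) (s (s (cp_e \<sigma>))) = mul (mul (s (cp_e \<sigma>)) (cp_e \<sigma>)) (cp_emb (\<sigma> n))"
      by (simp add: s_s e_C st mul_assoc)
    then show ?thesis by (simp add: a_emb st emb_mul)
  qed
  ultimately show ?thesis by simp
qed

end

context cpset begin

definition "mv X v = (\<lambda>\<beta>. \<Sum>\<tau>\<in>G. X \<beta> \<tau> * v \<tau>)"
definition "Q X v = (\<Sum>\<sigma>\<in>G. sK (v \<sigma>) * a \<sigma> * mv X v \<sigma>)"
definition "B X v w = (\<Sum>\<alpha>\<in>G. \<Sum>\<beta>\<in>G. sK (v \<alpha>) * a \<alpha> * X \<alpha> \<beta> * w \<beta>)"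

lemma Q_B: "Q X v = B X v v"
  by (simp add: Q_def B_def mv_def sum_distrib_left mult.assoc)

lemma mv_mm: "mv (mm A B') v = mv A (mv B' v)"
proof
  fix \<sigma>
  have "mv (mm A B') v \<sigma> = (\<Sum>\<tau>\<in>G. \<Sum>\<rho>\<in>G. A \<sigma> \<rho> * B' \<rho> \<tau> * v \<tau>)"
    by (simp add: mv_def mat_mult_def sum_distrib_right)
  also have "\<dots> = (\<Sum>\<rho>\<in>G. \<Sum>\<tau>\<in>G. A \<sigma> \<rho> * B' \<rho> \<tau> * v \<tau>)" by (rule sum.swap)
  also have "\<dots> = mv A (mv B' v) \<sigma>" by (simp add: mv_def sum_distrib_left mult.assoc)
  finally show "mv (mm A B') v \<sigma> = mv A (mv B' v) \<sigma>" .
qed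

lemma adjoint: "(\<Sum>\<sigma>\<in>G. sK (v \<sigma>) * a \<sigma> * mv Y u \<sigma>) = (\<Sum>\<alpha>\<in>G. sK (mv (sh Y) v \<alpha>) * a \<alpha> * u \<alpha>)"
proof -
  have "(\<Sum>\<sigma>\<in>G. sK (v \<sigma>) * a \<sigma> * mv Y u \<sigma>) = (\<Sum>\<sigma>\<in>G. \<Sum>\<alpha>\<in>G. sK (v \<sigma>) * a \<sigma> * Y \<sigma> \<alpha> * u \<alpha>)"
    by (simp add: mv_def sum_distrib_left mult.assoc)
  also have "\<dots> = (\<Sum>\<alpha>\<in>G. \<Sum>\<sigma>\<in>G. sK (v \<sigma>) * a \<sigma> * Y \<sigma> \<alpha> * u \<alpha>)" by (rule sum.swap)
  also have "\<dots> = (\<Sum>\<alpha>\<in>G. sK (mv (sh Y) v \<alpha>) * a \<alpha> * u \<alpha>)"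
  proof (rule sum.cong[OF refl])
    fix \<alpha> assume al: "\<alpha> \<in> G"
    have "sK (mv (sh Y) v \<alpha>) * a \<alpha> = (\<Sum>\<sigma>\<in>G. sK (inverse (a \<alpha>) * sK (Y \<sigma> \<alpha>) * a \<sigma> * v \<sigma>)) * a \<alpha>"
      using al by (simp add: mv_def mat_sharp_def sK_sum)
    also have "\<dots> = (\<Sum>\<sigma>\<in>G. inverse (a \<alpha>) * a \<alpha> * (Y \<sigma> \<alpha> * a \<sigma> * sK (v \<sigma>)))"
      unfolding sum_distrib_right by (intro sum.cong refl) (simp add: sK_mul sK_inverse a_herm al sK_sK mult_ac)
    also have "\<dots> = (\<Sum>\<sigma>\<in>G. Y \<sigma> \<alpha> * a \<sigma> * sK (v \<sigma>))" using a_nz[OF al] by simp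
    finally show "(\<Sum>\<sigma>\<in>G. sK (v \<sigma>) * a \<sigma> * Y \<sigma> \<alpha> * u \<alpha>) = sK (mv (sh Y) v \<alpha>) * a \<alpha> * u \<alpha>"
      by (simp add: sum_distrib_right sum_distrib_left mult_ac)
  qed
  finally show ?thesis .
qed

lemma Q_cong: "Q (mm (mm Y X) (sh Y)) v = Q X (mv (sh Y) v)"
  unfolding Q_def by (simp add: mv_mm adjoint)

lemma mm_MC: "A \<in> MC \<Longrightarrow> B' \<in> MC \<Longrightarrow> mm A B' \<in> MC"
  by (auto simp: mat_carrier_def mat_mult_def intro!: sum.neutral)
lemma sh_MC: "sh X \<in> MC" by (simp add: mat_carrier_def mat_sharp_def)
lemma mm_assoc: "mm (mm A B') D = mm A (mm B' D)"
proof (intro ext)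
  fix \<sigma> \<rho>
  have "mm (mm A B') D \<sigma> \<rho> = (\<Sum>\<tau>\<in>G. \<Sum>\<beta>\<in>G. A \<sigma> \<beta> * B' \<beta> \<tau> * D \<tau> \<rho>)"
    by (simp add: mat_mult_def sum_distrib_right)
  also have "\<dots> = (\<Sum>\<beta>\<in>G. \<Sum>\<tau>\<in>G. A \<sigma> \<beta> * B' \<beta> \<tau> * D \<tau> \<rho>)" by (rule sum.swap)
  also have "\<dots> = mm A (mm B' D) \<sigma> \<rho>" by (simp add: mat_mult_def sum_distrib_left mult.assoc)
  finally show "mm (mm A B') D \<sigma> \<rho> = mm A (mm B' D) \<sigma> \<rho>" .
qed

lemma sh_mm: "sh (mm A B') = mm (sh B') (sh A)"
proof (intro ext)
  fix \<sigma> \<rho>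
  show "sh (mm A B') \<sigma> \<rho> = mm (sh B') (sh A) \<sigma> \<rho>"
  proof (cases "\<sigma> \<in> G \<and> \<rho> \<in> G")
    case True
    then have "sh (mm A B') \<sigma> \<rho> = (\<Sum>\<tau>\<in>G. inverse (a \<sigma>) * sK (B' \<tau> \<sigma>) * sK (A \<rho> \<tau>) * a \<rho>)"
      by (simp add: mat_sharp_def mat_mult_def sK_sum sum_distrib_left sum_distrib_right sK_mul mult_ac)
    also have "\<dots> = mm (sh B') (sh A) \<sigma> \<rho>"
      unfolding mat_mult_def mat_sharp_def using True
      by (intro sum.cong refl) (auto simp: a_nz)
    finally show ?thesis .
  next
    case False then show ?thesis by (auto simp: mat_sharp_def mat_mult_def intro!: sum.neutral)
  qed
qed

lemma sh_sh: assumes X: "X \<in> MC" shows "sh (sh X) = X"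
proof (intro ext)
  fix \<sigma> \<tau>
  show "sh (sh X) \<sigma> \<tau> = X \<sigma> \<tau>"
  proof (cases "\<sigma> \<in> G \<and> \<tau> \<in> G")
    case True
    then have "sh (sh X) \<sigma> \<tau> = (inverse (a \<sigma>) * a \<sigma>) * (inverse (a \<tau>) * a \<tau>) * X \<sigma> \<tau>"
      by (simp add: mat_sharp_def sK_mul sK_inverse a_herm sK_sK mult_ac)
    then show ?thesis using True a_nz by simp
  next
    case False then show ?thesis using X by (auto simp: mat_sharp_def mat_carrier_def)
  qed
qed

lemma B_add: "B X (\<lambda>\<rho>. v \<rho> + w \<rho>) (\<lambda>\<rho>. v \<rho> + w \<rho>) = B X v v + B X v w + B X w v + B X w w"
  by (simp add: B_def sK_add algebra_simps sum.distrib)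

definition "dl \<sigma> t = (\<lambda>\<rho>. if \<rho> = \<sigma> then t else (0::'k))"

lemma B_dl: assumes "\<sigma> \<in> G" "\<tau> \<in> G" shows "B X (dl \<sigma> t) (dl \<tau> u) = sK t * a \<sigma> * X \<sigma> \<tau> * u"
proof -
  have "B X (dl \<sigma> t) (dl \<tau> u) = (\<Sum>\<alpha>\<in>G. if \<alpha> = \<sigma> then (\<Sum>\<beta>\<in>G. if \<beta> = \<tau> then sK t * a \<sigma> * X \<sigma> \<tau> * u else 0) else 0)"
    unfolding B_def dl_def by (intro sum.cong refl) (auto simp: sK_zero intro!: sum.cong)
  then show ?thesis using assms finG by simp
qed

lemma polar: assumes X: "X \<in> MC" "sh X = X" and q: "\<forall>v. Q X v = 0" shows "X = mat_zero"
proof (intro ext)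
  fix \<sigma> \<tau>
  show "X \<sigma> \<tau> = mat_zero \<sigma> \<tau>"
  proof (cases "\<sigma> \<in> G \<and> \<tau> \<in> G")
    case False then show ?thesis using X by (auto simp: mat_carrier_def mat_zero_def)
  next
    case True
    then have st: "\<sigma> \<in> G" "\<tau> \<in> G" by auto
    have diag: "X \<rho> \<rho> = 0" if r: "\<rho> \<in> G" for \<rho>
    proof -
      have "Q X (dl \<rho> 1) = a \<rho> * X \<rho> \<rho>" by (simp add: Q_B B_dl r sK_one)
      then show ?thesis using q a_nz[OF r] by simp
    qed
    show ?thesis
    proof (cases "\<sigma> = \<tau>")
      case True then show ?thesis using diag st by (simp add: mat_zero_def)
    next
      case ne: False
      define h where "h = a \<sigma> * X \<sigma> \<tau>"
      have sym: "a \<tau> * X \<tau> \<sigma> = sK h"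
      proof -
        have "X \<tau> \<sigma> = inverse (a \<tau>) * sK (X \<sigma> \<tau>) * a \<sigma>" using X(2) st
          by (metis (no_types, lifting) mat_sharp_def)
        then have "a \<tau> * X \<tau> \<sigma> = (a \<tau> * inverse (a \<tau>)) * sK (X \<sigma> \<tau>) * a \<sigma>" by (simp add: mult_ac)
        also have "\<dots> = sK (X \<sigma> \<tau>) * sK (a \<sigma>)" using a_nz[OF st(2)] a_herm[OF st(1)] by simp
        also have "\<dots> = sK h" by (simp add: h_def sK_mul mult.commute)
        finally show ?thesis .
      qed
      have key: "h * t + sK (h * t) = 0" for t
      proof -
        have "(\<lambda>\<rho>. dl \<sigma> 1 \<rho> + dl \<tau> t \<rho>) = (\<lambda>\<rho>. dl \<sigma> 1 \<rho> + dl \<tau> t \<rho>)" ..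
        have "0 = Q X (\<lambda>\<rho>. dl \<sigma> 1 \<rho> + dl \<tau> t \<rho>)" using q by simp
        also have "\<dots> = a \<sigma> * X \<sigma> \<tau> * t + sK t * (a \<tau> * X \<tau> \<sigma>)"
          by (simp add: Q_B B_add B_dl st sK_one diag)
        also have "\<dots> = h * t + sK (h * t)" by (simp only: sym h_def[symmetric] sK_mul) (simp add: mult.commute)
        finally show ?thesis by simp
      qed
      have "h = 0"
      proof (cases "\<forall>t. sK t = t")
        case True
        then have "h + h = 0" using key[of 1] by simp
        then show ?thesis by simp
      next
        case False
        then obtain t where t: "sK t \<noteq> t" by blast
        have "sK h = - h" using key[of 1] by (simp add: eq_neg_iff_add_eq_0 add.commute)
        then have "h * (t - sK t) = 0" using key[of t] by (simp add: sK_mul algebra_simps)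
        then show ?thesis using t by simp
      qed
      then show ?thesis using a_nz[OF st(1)] by (simp add: h_def mat_zero_def)
    qed
  qed
qed

end

context cpset begin

lemma N_sum: assumes N: "herm_cone_K sK N"
  shows "finite I \<Longrightarrow> (\<forall>i\<in>I. f i \<in> N) \<Longrightarrow> sum f I \<in> N"
proof (induction I rule: finite_induct)
  case empty
  have "0 \<in> N" using N unfolding unital_herm_cone_def by blast
  then show ?case by simp
next
  case (insert i I)
  then show ?case using N unfolding unital_herm_cone_def by auto
qed

lemma mv_one: "\<sigma> \<in> G \<Longrightarrow> mv (mat_one G) v \<sigma> = v \<sigma>"
proof -
  assume s: "\<sigma> \<in> G"
  have "mv (mat_one G) v \<sigma> = (\<Sum>\<tau>\<in>G. if \<tau> = \<sigma> then v \<tau> else 0)"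
    unfolding mv_def mat_one_def using s by (intro sum.cong) auto
  then show ?thesis using s finG by simp
qed

lemma lr_emb: "lr (cp_emb k) = (\<lambda>\<sigma> \<tau>. if \<sigma> \<in> G \<and> \<tau> \<in> G \<and> \<sigma> = \<tau> then \<sigma> k else 0)"
  by (intro ext) (auto simp: lreg_def mul_emb_left e_C, auto simp: cp_e_def)

lemma mv_emb: "\<sigma> \<in> G \<Longrightarrow> mv (lr (cp_emb k)) v \<sigma> = \<sigma> k * v \<sigma>"
proof -
  assume s: "\<sigma> \<in> G"
  have "mv (lr (cp_emb k)) v \<sigma> = (\<Sum>\<tau>\<in>G. if \<tau> = \<sigma> then \<sigma> k * v \<tau> else 0)"
    unfolding mv_def lr_emb using s by (intro sum.cong) auto
  then show ?thesis using s finG by simp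
qed

lemma one_three:
  assumes N: "herm_cone_K sK N" and P1: "\<forall>n\<in>N. \<forall>\<sigma>\<in>G. a \<sigma> * \<sigma> n \<in> N"
  shows "\<exists>L. unital_herm_cone MC mat_add mm mat_neg mat_zero (mat_one G) sh L \<and> N = {k. lr (cp_emb k) \<in> L}"
proof -
  have Nh: "\<And>n. n \<in> N \<Longrightarrow> sK n = n" using N unfolding unital_herm_cone_def by blast
  have N1: "1 \<in> N" using N unfolding unital_herm_cone_def by blast
  have Nadd: "\<And>x y. x \<in> N \<Longrightarrow> y \<in> N \<Longrightarrow> x + y \<in> N" using N unfolding unital_herm_cone_def by blast
  have Nc: "\<And>x n. n \<in> N \<Longrightarrow> x * n * sK x \<in> N" using N unfolding unital_herm_cone_def by blast
  have Np: "N \<inter> uminus ` N = {0}" using N unfolding unital_herm_cone_def by blast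
  have N0: "0 \<in> N" using Np by blast
  have aN: "\<And>\<sigma>. \<sigma> \<in> G \<Longrightarrow> a \<sigma> \<in> N" using P1 N1 by (metis fa_one faG mult_1_right)
  have trm: "\<And>\<sigma> m x. m \<in> N \<Longrightarrow> sK x * m * x \<in> N" using Nc by (metis sK_sK)
  define L where "L = {X \<in> MC. sh X = X \<and> (\<forall>v. Q X v \<in> N)}"
  have Q_add: "Q (mat_add X Y) v = Q X v + Q Y v" for X Y v
    by (simp add: Q_def mv_def mat_add_def sum.distrib[symmetric] algebra_simps sum_distrib_left)
  have Q_neg: "Q (mat_neg X) v = - Q X v" for X v
    by (simp add: Q_def mv_def mat_neg_def sum_negf[symmetric] sum_distrib_left)
  have Q_zero: "Q mat_zero v = 0" for v by (simp add: Q_def mv_def mat_zero_def)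
  have "L \<subseteq> {X \<in> MC. sh X = X}" unfolding L_def by blast
  moreover have "mat_one G \<in> L"
  proof -
    have "mat_one G \<in> MC" by (simp add: mat_one_def mat_carrier_def)
    moreover have "sh (mat_one G) = mat_one G"
      by (intro ext) (auto simp: mat_sharp_def mat_one_def sK_one a_nz sK_zero)
    moreover have "Q (mat_one G) v \<in> N" for v
      unfolding Q_def by (rule N_sum[OF N finG]) (simp add: mv_one trm aN)
    ultimately show ?thesis unfolding L_def by blast
  qed
  moreover have "\<forall>X\<in>L. \<forall>Y\<in>L. mat_add X Y \<in> L"
  proof (intro ballI)
    fix X Y assume X: "X \<in> L" and Y: "Y \<in> L"
    have "mat_add X Y \<in> MC" using X Y by (auto simp: L_def mat_carrier_def mat_add_def)
    moreover have "sh (mat_add X Y) = mat_add (sh X) (sh Y)"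
      by (intro ext) (auto simp: mat_sharp_def mat_add_def sK_add algebra_simps)
    ultimately show "mat_add X Y \<in> L" using X Y by (auto simp: L_def Q_add Nadd)
  qed
  moreover have "\<forall>A\<in>MC. \<forall>X\<in>L. mm (mm A X) (sh A) \<in> L"
  proof (intro ballI)
    fix A X assume A: "A \<in> MC" and X: "X \<in> L"
    have XM: "X \<in> MC" and Xs: "sh X = X" using X by (auto simp: L_def)
    have "mm (mm A X) (sh A) \<in> MC" using A XM by (simp add: mm_MC sh_MC)
    moreover have "sh (mm (mm A X) (sh A)) = mm (mm A X) (sh A)"
      by (simp add: sh_mm sh_sh A Xs mm_assoc)
    moreover have "Q (mm (mm A X) (sh A)) v \<in> N" for v using X by (simp add: Q_cong L_def)
    ultimately show "mm (mm A X) (sh A) \<in> L" by (simp add: L_def)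
  qed
  moreover have "L \<inter> mat_neg ` L = {mat_zero}"
  proof
    have zL: "mat_zero \<in> L"
    proof -
      have "sh mat_zero = mat_zero" by (intro ext) (simp add: mat_sharp_def mat_zero_def sK_zero)
      moreover have "mat_zero \<in> MC" by (simp add: mat_carrier_def mat_zero_def)
      ultimately show ?thesis using Q_zero N0 by (simp add: L_def)
    qed
    have e: "mat_neg mat_zero = mat_zero" by (simp add: mat_neg_def mat_zero_def)
    have "mat_zero \<in> mat_neg ` L" using image_eqI[where f=mat_neg and x=mat_zero, OF e[symmetric] zL] .
    then show "{mat_zero} \<subseteq> L \<inter> mat_neg ` L" using zL by blast
  next
    show "L \<inter> mat_neg ` L \<subseteq> {mat_zero}"
    proof clarify
      fix Y assume X: "mat_neg Y \<in> L" and Y: "Y \<in> L"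
      have "Q (mat_neg Y) v = 0" for v
      proof -
        have "Q (mat_neg Y) v \<in> N" using X by (simp add: L_def)
        moreover have "- Q (mat_neg Y) v \<in> N" using Y by (simp add: L_def Q_neg)
        ultimately have "Q (mat_neg Y) v \<in> N \<inter> uminus ` N" by (metis IntI image_eqI minus_minus)
        then show ?thesis using Np by blast
      qed
      then show "mat_neg Y = mat_zero" using X polar by (simp add: L_def)
    qed
  qed
  moreover have "N = {k. lr (cp_emb k) \<in> L}"
  proof (intro set_eqI iffI; simp)
    fix k assume k: "k \<in> N"
    have "lr (cp_emb k) \<in> MC" by (rule lr_C)
    moreover have "sh (lr (cp_emb k)) = lr (cp_emb k)"
      by (intro ext) (auto simp: lr_emb mat_sharp_def sK_comm Nh[OF k] a_nz sK_zero)
    moreover have "Q (lr (cp_emb k)) v \<in> N" for v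
    proof -
      have "Q (lr (cp_emb k)) v = (\<Sum>\<sigma>\<in>G. sK (v \<sigma>) * (a \<sigma> * \<sigma> k) * v \<sigma>)"
        unfolding Q_def by (intro sum.cong refl) (simp add: mv_emb mult_ac)
      also have "\<dots> \<in> N" using P1 k by (intro N_sum[OF N finG]) (simp add: trm)
      finally show ?thesis .
    qed
    ultimately show "lr (cp_emb k) \<in> L" by (simp add: L_def)
  next
    fix k assume "lr (cp_emb k) \<in> L"
    then have "Q (lr (cp_emb k)) (dl id 1) \<in> N" by (simp add: L_def)
    moreover have "Q (lr (cp_emb k)) (dl id 1) = k"
      by (simp add: Q_B B_dl idG sK_one a_id lr_emb)
    ultimately show "k \<in> N" by simp
  qed
  ultimately show ?thesis unfolding unital_herm_cone_def by blast
qed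

end

theorem corollary4p3:
  fixes G :: "('k::field_char_0 \<Rightarrow> 'k) set"
    and \<Phi> :: "('k \<Rightarrow> 'k) \<Rightarrow> ('k \<Rightarrow> 'k) \<Rightarrow> 'k"
    and s :: "'k cp \<Rightarrow> 'k cp"
    and N :: "'k set"
  assumes "finite_aut_group G"
    and "normalized_cocycle G \<Phi>"
    and "cp_division_algebra G \<Phi>"
    and "cp_involution G \<Phi> s"
    and "\<forall>k. \<exists>k'. s (cp_emb k) = cp_emb k'"
    and "\<forall>\<sigma>\<in>G. \<exists>k. cp_mult G \<Phi> (s (cp_e \<sigma>)) (cp_e \<sigma>) = cp_emb k"
    and "\<exists>M0. herm_cone_K (star_K s) M0 \<and> (\<forall>\<sigma>\<in>G. a_coef G \<Phi> s \<sigma> \<in> M0)"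
    and "herm_cone_K (star_K s) N"
  shows "((\<forall>n\<in>N. \<forall>\<sigma>\<in>G. a_coef G \<Phi> s \<sigma> * \<sigma> n \<in> N)
           \<longleftrightarrow> (\<exists>M. herm_cone_D G \<Phi> s M \<and> N = {k. cp_emb k \<in> M}))
       \<and> ((\<exists>M. herm_cone_D G \<Phi> s M \<and> N = {k. cp_emb k \<in> M})
           \<longleftrightarrow> (\<exists>L. unital_herm_cone (mat_carrier G) mat_add (mat_mult G) mat_neg mat_zero
                       (mat_one G) (mat_sharp G (a_coef G \<Phi> s) (star_K s)) L
                   \<and> N = {k. lreg G \<Phi> (cp_emb k) \<in> L}))"
proof -
  interpret cpset G \<Phi> s using assms(1,2,4,5,6) by unfold_locales
  let ?P1 = "\<forall>n\<in>N. \<forall>\<sigma>\<in>G. a_coef G \<Phi> s \<sigma> * \<sigma> n \<in> N"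
  let ?P2 = "\<exists>M. herm_cone_D G \<Phi> s M \<and> N = {k. cp_emb k \<in> M}"
  let ?P3 = "\<exists>L. unital_herm_cone (mat_carrier G) mat_add (mat_mult G) mat_neg mat_zero
                       (mat_one G) (mat_sharp G (a_coef G \<Phi> s) (star_K s)) L
                   \<and> N = {k. lreg G \<Phi> (cp_emb k) \<in> L}"
  have 13: "?P1 \<Longrightarrow> ?P3" using one_three[OF assms(8)] by blast
  have 32: "?P3 \<Longrightarrow> ?P2"
  proof -
    assume ?P3
    then obtain L where L: "unital_herm_cone MC mat_add mm mat_neg mat_zero (mat_one G) sh L"
      and NL: "N = {k. lr (cp_emb k) \<in> L}" by blast
    have "herm_cone_D G \<Phi> s {x\<in>C. lr x \<in> L}" by (rule pullback[OF L])
    moreover have "N = {k. cp_emb k \<in> {x\<in>C. lr x \<in> L}}" using NL emb_C by blast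
    ultimately show ?P2 by blast
  qed
  have 21: "?P2 \<Longrightarrow> ?P1"
  proof -
    assume ?P2
    then obtain M where M: "herm_cone_D G \<Phi> s M" and NM: "N = {k. cp_emb k \<in> M}" by blast
    show ?P1 using two_one[OF M] NM by blast
  qed
  show ?thesis using 13 32 21 by blast
qed

end
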